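(* Consider the asynchronous $(n,k)$ game on the complete graph with agent set $[n]$ consisting of $n_r$ rejectors, $n_c$ consentors, and $n-n_r-n_c$ random followers, with $1\le n_c<k\le n-n_r$. Then almost surely a decision is made in finite time, i.e. almost surely there exists $t\ge 0$ with $\sum_{i\in[n]}x_i(t)\ge k$.
   Context: Each agent $i\in[n]$ holds an opinion $x_i(t)\in\{0,1\}$ at time $t=0,1,2,\dots$. The social graph is complete: every agent's social neighbors are all the other $n-1$ agents. In the $(n,k)$ game a decision is made at time $t$ if $\sum_{i\in[n]}x_i(t)\ge k$. The game is asynchronous: at each time step a single agent, chosen uniformly at random from $[n]$ (independently of the past), updates its opinion, and all other opinions stay the same. A rejector holds opinion $0$ at all times; a consentor holds opinion $1$ at all times. A random follower has initial opinion distributed as Bernoulli$(1/2)$ (independently across agents), and when it updates it adopts the current opinion of one of its social neighbors chosen uniformly at random. *)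

theory Defs
  imports "HOL-Probability.Probability"
begin

text \<open>Agents are 0,...,n-1. R = rejectors, C = consentors, the remaining agents
  of {..<n} are random followers.\<close>

definition followers :: "nat \<Rightarrow> nat set \<Rightarrow> nat set \<Rightarrow> nat set" where
  "followers n R C = {..<n} - R - C"

definition step_pmf :: "nat \<Rightarrow> (nat \<times> nat) pmf" where
  "step_pmf n = bind_pmf (pmf_of_set {..<n})
      (\<lambda>i. map_pmf (\<lambda>j. (i, j)) (pmf_of_set ({..<n} - {i})))"

definition init_pmf :: "nat \<Rightarrow> nat set \<Rightarrow> nat set \<Rightarrow> (nat \<Rightarrow> bool) pmf" where
  "init_pmf n R C = Pi_pmf (followers n R C) False (\<lambda>_. bernoulli_pmf (1/2))"

definition game_space :: "nat \<Rightarrow> nat set \<Rightarrow> nat set \<Rightarrow> ((nat \<Rightarrow> bool) \<times> (nat \<times> nat) stream) measure" where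
  "game_space n R C = measure_pmf (init_pmf n R C) \<Otimes>\<^sub>M stream_space (measure_pmf (step_pmf n))"

text \<open>Opinion of agent i at time t (True = opinion 1).\<close>
fun opinion :: "nat \<Rightarrow> nat set \<Rightarrow> nat set \<Rightarrow> (nat \<Rightarrow> bool) \<times> (nat \<times> nat) stream \<Rightarrow> nat \<Rightarrow> nat \<Rightarrow> bool" where
  "opinion n R C \<omega> 0 = (\<lambda>i. i \<in> C \<or> (i \<in> followers n R C \<and> fst \<omega> i))"
| "opinion n R C \<omega> (Suc t) =
     (let (i, j) = snd \<omega> !! t; x = opinion n R C \<omega> t
      in if i \<in> followers n R C then x(i := x j) else x)"

definition decision_at :: "nat \<Rightarrow> nat set \<Rightarrow> nat set \<Rightarrow> nat \<Rightarrow> (nat \<Rightarrow> bool) \<times> (nat \<times> nat) stream \<Rightarrow> nat \<Rightarrow> bool" where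
  "decision_at n R C k \<omega> t \<longleftrightarrow> (\<Sum>i<n. (if opinion n R C \<omega> t i then 1 else 0 :: nat)) \<ge> k"

end

theory Submission
  imports Defs
begin

lemma space_SS[simp]: "space (stream_space (measure_pmf p)) = UNIV"
  by (simp add: space_stream_space)

lemma shift1_emeasure:
  fixes p :: "'a pmf"
  assumes [measurable]: "Measurable.pred (stream_space (measure_pmf p)) Q"
  shows "emeasure (stream_space (measure_pmf p)) {\<omega>. Q (stl \<omega>)} = emeasure (stream_space (measure_pmf p)) {\<omega>. Q \<omega>}"
proof -
  have "Measurable.pred (stream_space (measure_pmf p)) (\<lambda>\<omega>. Q (stl \<omega>))"
    by measurable
  then have [measurable]: "{\<omega>. Q (stl \<omega>)} \<in> sets (stream_space (measure_pmf p))"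
    unfolding pred_def by simp
  have "emeasure (stream_space (measure_pmf p)) {\<omega>. Q (stl \<omega>)}
     = (\<integral>\<^sup>+t. emeasure (stream_space (measure_pmf p)) {x. t ## x \<in> {\<omega>. Q (stl \<omega>)}} \<partial>measure_pmf p)"
    using prob_space.emeasure_stream_space[OF prob_space_measure_pmf[of p], of "{\<omega>. Q (stl \<omega>)}"] by simp
  also have "\<dots> = (\<integral>\<^sup>+t. emeasure (stream_space (measure_pmf p)) {x. Q x} \<partial>measure_pmf p)"
    by simp
  also have "\<dots> = emeasure (stream_space (measure_pmf p)) {x. Q x}"
    by simp
  finally show ?thesis .
qed

lemma shift_emeasure:
  fixes p :: "'a pmf"
  assumes [measurable]: "Measurable.pred (stream_space (measure_pmf p)) Q"
  shows "emeasure (stream_space (measure_pmf p)) {\<omega>. Q (sdrop L \<omega>)} = emeasure (stream_space (measure_pmf p)) {\<omega>. Q \<omega>}"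
proof (induction L)
  case 0 then show ?case by simp
next
  case (Suc L)
  have "Measurable.pred (stream_space (measure_pmf p)) (\<lambda>\<omega>. Q (sdrop L \<omega>))"
    by measurable
  from shift1_emeasure[OF this] Suc show ?case by simp
qed

lemma pattern_emeasure:
  fixes p :: "'a::countable pmf"
  assumes [measurable]: "Measurable.pred (stream_space (measure_pmf p)) Q"
  shows "emeasure (stream_space (measure_pmf p)) {\<omega>. stake (length xs) \<omega> = xs \<and> Q (sdrop (length xs) \<omega>)}
     = ennreal (\<Prod>x\<leftarrow>xs. pmf p x) * emeasure (stream_space (measure_pmf p)) {\<omega>. Q \<omega>}"
proof (induction xs)
  case Nil then show ?case by simp
next
  case (Cons y xs)
  have "Measurable.pred (stream_space (measure_pmf p)) (\<lambda>\<omega>. stake (length (y#xs)) \<omega> = y#xs \<and> Q (sdrop (length (y#xs)) \<omega>))"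
    by measurable
  then have ms[measurable]: "{\<omega>. stake (length (y#xs)) \<omega> = y#xs \<and> Q (sdrop (length (y#xs)) \<omega>)} \<in> sets (stream_space (measure_pmf p))"
    unfolding pred_def by simp
  have "emeasure (stream_space (measure_pmf p)) {\<omega>. stake (length (y#xs)) \<omega> = y#xs \<and> Q (sdrop (length (y#xs)) \<omega>)}
     = (\<integral>\<^sup>+t. emeasure (stream_space (measure_pmf p)) {x. t ## x \<in> {\<omega>. stake (length (y#xs)) \<omega> = y#xs \<and> Q (sdrop (length (y#xs)) \<omega>)}} \<partial>measure_pmf p)"
    using prob_space.emeasure_stream_space[OF prob_space_measure_pmf[of p] ms] by simp
  also have "\<dots> = (\<integral>\<^sup>+t. indicator {y} t * emeasure (stream_space (measure_pmf p)) {x. stake (length xs) x = xs \<and> Q (sdrop (length xs) x)} \<partial>measure_pmf p)"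
    by (intro nn_integral_cong) (auto split: split_indicator)
  also have "\<dots> = emeasure (measure_pmf p) {y} * emeasure (stream_space (measure_pmf p)) {x. stake (length xs) x = xs \<and> Q (sdrop (length xs) x)}"
    by (simp add: nn_integral_multc)
  finally show ?case using Cons
    by (simp add: emeasure_pmf_single ennreal_mult' mult.assoc)
qed

lemma nohit_measure:
  fixes p :: "'a::countable pmf" and pat :: "'a list"
  defines "S \<equiv> stream_space (measure_pmf p)"
  shows "measure S {\<omega>. \<forall>b<B. stake (length pat) (sdrop (b * length pat) \<omega>) \<noteq> pat}
     = (1 - (\<Prod>x\<leftarrow>pat. pmf p x)) ^ B"
proof (induction B)
  case 0
  interpret S: prob_space S unfolding S_def by (rule prob_space.prob_space_stream_space[OF prob_space_measure_pmf])
  show ?case using S.prob_space by (simp add: S_def)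
next
  case (Suc B)
  interpret S: prob_space S unfolding S_def by (rule prob_space.prob_space_stream_space[OF prob_space_measure_pmf])
  define L where "L = length pat"
  define Q where "Q = (\<lambda>\<omega>. \<forall>b<B. stake L (sdrop (b * L) \<omega>) \<noteq> pat)"
  have mQ[measurable]: "Measurable.pred (stream_space (measure_pmf p)) Q" unfolding Q_def by measurable
  have eq: "{\<omega>. \<forall>b<Suc B. stake L (sdrop (b * L) \<omega>) \<noteq> pat}
    = {\<omega>. Q (sdrop L \<omega>)} - {\<omega>. stake L \<omega> = pat \<and> Q (sdrop L \<omega>)}"
    unfolding Q_def by (auto simp: less_Suc_eq_0_disj sdrop_add add.commute)
  have s1: "{\<omega>. Q (sdrop L \<omega>)} \<in> sets S"
  proof -
    have "Measurable.pred S (\<lambda>\<omega>. Q (sdrop L \<omega>))" unfolding S_def by measurable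
    then show ?thesis unfolding pred_def by (simp add: S_def)
  qed
  have s2: "{\<omega>. stake L \<omega> = pat \<and> Q (sdrop L \<omega>)} \<in> sets S"
  proof -
    have "Measurable.pred S (\<lambda>\<omega>. stake L \<omega> = pat \<and> Q (sdrop L \<omega>))" unfolding S_def by measurable
    then show ?thesis unfolding pred_def by (simp add: S_def)
  qed
  have e1: "emeasure S {\<omega>. Q (sdrop L \<omega>)} = emeasure S {\<omega>. Q \<omega>}"
    unfolding S_def by (rule shift_emeasure) (rule mQ)
  have e2: "emeasure S {\<omega>. stake L \<omega> = pat \<and> Q (sdrop L \<omega>)} = ennreal (\<Prod>x\<leftarrow>pat. pmf p x) * emeasure S {\<omega>. Q \<omega>}"
    unfolding S_def L_def by (rule pattern_emeasure) (rule mQ)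
  have m1: "measure S {\<omega>. Q (sdrop L \<omega>)} = measure S {\<omega>. Q \<omega>}"
    using e1 by (simp add: S.emeasure_eq_measure)
  have m2: "measure S {\<omega>. stake L \<omega> = pat \<and> Q (sdrop L \<omega>)} = (\<Prod>x\<leftarrow>pat. pmf p x) * measure S {\<omega>. Q \<omega>}"
  proof -
    have qn: "(\<Prod>x\<leftarrow>pat. pmf p x) \<ge> 0" by (rule prod_list_nonneg) auto
    have "ennreal (measure S {\<omega>. stake L \<omega> = pat \<and> Q (sdrop L \<omega>)}) = ennreal ((\<Prod>x\<leftarrow>pat. pmf p x) * measure S {\<omega>. Q \<omega>})"
      using e2 qn by (simp add: S.emeasure_eq_measure ennreal_mult)
    then show ?thesis using qn by (subst (asm) ennreal_inj) auto
  qed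
  have "measure S {\<omega>. \<forall>b<Suc B. stake L (sdrop (b * L) \<omega>) \<noteq> pat}
     = measure S {\<omega>. Q (sdrop L \<omega>)} - measure S {\<omega>. stake L \<omega> = pat \<and> Q (sdrop L \<omega>)}"
    unfolding eq by (rule S.finite_measure_Diff[OF s1 s2]) auto
  also have "\<dots> = (1 - (\<Prod>x\<leftarrow>pat. pmf p x)) * measure S {\<omega>. Q \<omega>}"
    using m1 m2 by (simp add: algebra_simps)
  finally show ?case using Suc unfolding Q_def L_def by simp
qed

lemma pattern_AE:
  fixes p :: "'a::countable pmf" and pat :: "'a list"
  assumes "\<And>x. x \<in> set pat \<Longrightarrow> pmf p x > 0"
  shows "AE \<omega> in stream_space (measure_pmf p). \<exists>b. stake (length pat) (sdrop (b * length pat) \<omega>) = pat"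
proof -
  define S where "S = stream_space (measure_pmf p)"
  interpret S: prob_space S unfolding S_def by (rule prob_space.prob_space_stream_space[OF prob_space_measure_pmf])
  define N where "N = {\<omega>. \<forall>b. stake (length pat) (sdrop (b * length pat) \<omega>) \<noteq> pat}"
  have "Measurable.pred S (\<lambda>\<omega>. \<forall>b. stake (length pat) (sdrop (b * length pat) \<omega>) \<noteq> pat)"
    unfolding S_def by measurable
  then have sN: "N \<in> sets S" unfolding pred_def N_def by (simp add: S_def)
  define q where "q = (\<Prod>x\<leftarrow>pat. pmf p x)"
  have qpos: "q > 0" unfolding q_def using assms by (induction pat) auto
  have le: "measure S N \<le> (1 - q) ^ B" for B
  proof -
    have "Measurable.pred S (\<lambda>\<omega>. \<forall>b<B. stake (length pat) (sdrop (b * length pat) \<omega>) \<noteq> pat)"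
      unfolding S_def by measurable
    then have "{\<omega>. \<forall>b<B. stake (length pat) (sdrop (b * length pat) \<omega>) \<noteq> pat} \<in> sets S"
      unfolding pred_def by (simp add: S_def)
    then have "measure S N \<le> measure S {\<omega>. \<forall>b<B. stake (length pat) (sdrop (b * length pat) \<omega>) \<noteq> pat}"
      by (intro S.finite_measure_mono) (auto simp: N_def)
    then show ?thesis using nohit_measure[where p=p and pat=pat and B=B] by (simp add: S_def q_def)
  qed
  have "measure S N = 0"
  proof (rule ccontr)
    assume "measure S N \<noteq> 0"
    then have "measure S N > 0" using measure_nonneg[of S N] by linarith
    then obtain B where "(1 - q) ^ B < measure S N" using real_arch_pow_inv[of "measure S N" "1 - q"] qpos by auto
    with le[of B] show False by simp
  qed
  then have "emeasure S N = 0" by (simp add: S.emeasure_eq_measure)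
  then have "AE \<omega> in S. \<exists>b. stake (length pat) (sdrop (b * length pat) \<omega>) = pat"
    by (subst AE_iff_measurable[OF sN]) (auto simp: N_def S_def)
  then show ?thesis unfolding S_def .
qed

lemma consentor_true:
  assumes "c \<in> C"
  shows "opinion n R C \<omega> t c"
  using assms
  by (induction t) (auto simp: followers_def Let_def split: prod.splits)

lemma block_true:
  assumes "c0 \<in> C" and "set fs \<subseteq> followers n R C"
    and "\<forall>r<length fs. snd \<omega> !! (s + r) = (fs ! r, c0)"
  shows "r \<le> length fs \<Longrightarrow> i < r \<Longrightarrow> opinion n R C \<omega> (s + r) (fs ! i)"
proof (induction r arbitrary: i)
  case 0 then show ?case by simp
next
  case (Suc r)
  have st: "snd \<omega> !! (s + r) = (fs ! r, c0)" using assms(3) Suc.prems by auto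
  have fr: "fs ! r \<in> followers n R C" using assms(2) Suc.prems by auto
  have c0: "opinion n R C \<omega> (s + r) c0" by (rule consentor_true[OF assms(1)])
  show ?case
    using Suc.IH[of i] Suc.prems st fr c0 by (cases "i < r") (auto simp: Let_def less_Suc_eq)
qed

lemma step_pmf_pos:
  assumes "f < n" "c < n" "f \<noteq> c"
  shows "pmf (step_pmf n) (f, c) > 0"
proof -
  have "(f, c) \<in> set_pmf (step_pmf n)"
  proof -
    have a: "{..<n} - {f} \<noteq> {}" using assms by auto
    have b: "{..<n} \<noteq> {}" using assms by auto
    show ?thesis
      unfolding step_pmf_def using assms
      by (auto simp: set_bind_pmf set_pmf_of_set[OF a] set_pmf_of_set[OF b] intro!: bexI[of _ f])
  qed
  then show ?thesis by (simp add: pmf_positive)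
qed

theorem lemma3:
  fixes n k :: nat and R C :: "nat set"
  assumes "R \<subseteq> {..<n}" and "C \<subseteq> {..<n}" and "R \<inter> C = {}"
    and "1 \<le> card C" and "card C < k" and "k \<le> n - card R"
  shows "AE \<omega> in game_space n R C. \<exists>t. decision_at n R C k \<omega> t"
proof -
  define F where "F = followers n R C"
  have finC: "finite C" using assms(2) finite_subset by blast
  have finR: "finite R" using assms(1) finite_subset by blast
  have finF: "finite F" unfolding F_def followers_def by simp
  obtain c0 where c0: "c0 \<in> C" using assms(4) by (metis card.empty ex_in_conv not_one_le_zero)
  define fs where "fs = sorted_list_of_set F"
  have setfs: "set fs = F" unfolding fs_def using finF by simp
  define L where "L = length fs"
  define pat where "pat = map (\<lambda>f. (f, c0)) fs"
  have lenpat: "length pat = L" unfolding pat_def L_def by simp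
  have pos: "pmf (step_pmf n) x > 0" if xp: "x \<in> set pat" for x
  proof -
    obtain f where f: "f \<in> F" "x = (f, c0)" using xp setfs unfolding pat_def by auto
    show ?thesis unfolding f(2)
      by (rule step_pmf_pos) (use f(1) c0 assms(2) in \<open>auto simp: F_def followers_def\<close>)
  qed
  have AEs: "AE s in stream_space (measure_pmf (step_pmf n)). \<exists>b. stake L (sdrop (b * L) s) = pat"
    using pattern_AE[of pat "step_pmf n", OF pos] lenpat by simp
  interpret P: pair_prob_space "measure_pmf (init_pmf n R C)" "stream_space (measure_pmf (step_pmf n))"
    using prob_space_measure_pmf prob_space.prob_space_stream_space[OF prob_space_measure_pmf]
    unfolding pair_prob_space_def pair_sigma_finite_def
    by (auto intro: prob_space_imp_sigma_finite)
  have "Measurable.pred (measure_pmf (init_pmf n R C) \<Otimes>\<^sub>M stream_space (measure_pmf (step_pmf n)))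
     (\<lambda>\<omega>. \<exists>b. stake L (sdrop (b * L) (snd \<omega>)) = pat)"
    by measurable
  then have AE1: "AE \<omega> in game_space n R C. \<exists>b. stake L (sdrop (b * L) (snd \<omega>)) = pat"
    unfolding game_space_def pred_def
    by (intro P.AE_pair_measure) (auto simp: AEs)
  have cardF: "card F = n - card R - card C"
  proof -
    have "F = {..<n} - (R \<union> C)" unfolding F_def followers_def by auto
    then have "card F = card {..<n} - card (R \<union> C)"
      using assms(1,2) finR finC by (simp add: card_Diff_subset)
    also have "card (R \<union> C) = card R + card C" using card_Un_disjoint[OF finR finC assms(3)] .
    finally show ?thesis by simp
  qed
  show ?thesis
  proof (rule eventually_mono[OF AE1])
    fix \<omega> :: "(nat \<Rightarrow> bool) \<times> (nat \<times> nat) stream" assume "\<exists>b. stake L (sdrop (b * L) (snd \<omega>)) = pat"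
    then obtain b where hb: "stake L (sdrop (b * L) (snd \<omega>)) = pat" by blast
    have hs: "\<forall>r<length fs. snd \<omega> !! (b * L + r) = (fs ! r, c0)"
    proof (intro allI impI)
      fix r assume r: "r < length fs"
      have "stake L (sdrop (b * L) (snd \<omega>)) ! r = pat ! r" using hb by simp
      then show "snd \<omega> !! (b * L + r) = (fs ! r, c0)"
        using r by (simp add: L_def pat_def stake_nth sdrop_snth)
    qed
    define t where "t = b * L + L"
    have allF: "opinion n R C \<omega> t f" if fF: "f \<in> F" for f
    proof -
      obtain i where i: "i < length fs" "f = fs ! i" using fF setfs by (metis in_set_conv_nth)
      have "opinion n R C \<omega> (b * L + length fs) (fs ! i)"
        by (rule block_true[OF c0 _ hs]) (use setfs i in \<open>auto simp: F_def\<close>)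
      then show ?thesis unfolding t_def i(2) L_def .
    qed
    have allC: "opinion n R C \<omega> t c" if "c \<in> C" for c
      using consentor_true[OF that] .
    have sub: "F \<union> C \<subseteq> {i \<in> {..<n}. opinion n R C \<omega> t i}"
      using allF allC assms(2) by (auto simp: F_def followers_def)
    have "card (F \<union> C) = card F + card C"
      by (rule card_Un_disjoint[OF finF finC]) (auto simp: F_def followers_def)
    also have "\<dots> = n - card R" using cardF assms by simp
    finally have "k \<le> card (F \<union> C)" using assms(6) by simp
    also have "\<dots> \<le> card {i \<in> {..<n}. opinion n R C \<omega> t i}"
      by (rule card_mono[OF _ sub]) simp
    also have "\<dots> = (\<Sum>i<n. (if opinion n R C \<omega> t i then 1 else 0 :: nat))"
      by (simp add: sum.If_cases Int_def)
    finally show "\<exists>t. decision_at n R C k \<omega> t"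
      unfolding decision_at_def by blast
  qed
qed

end
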